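(* In a finite two-player game in normal form (bimatrix game), if there is a unique Nash equilibrium and this equilibrium is in pure strategies, then it is a strict Nash equilibrium.
   Context: A Nash equilibrium $(s_1,s_2)$ in pure strategies is strict if each player's equilibrium strategy is her unique best reply to the other player's equilibrium strategy. *)

theory Defs
  imports Main "HOL.Real"
begin

definition mixed :: "('a::finite \<Rightarrow> real) \<Rightarrow> bool" where
  "mixed x \<longleftrightarrow> (\<forall>i. 0 \<le> x i) \<and> (\<Sum>i\<in>UNIV. x i) = 1"

definition payoff :: "('a::finite \<Rightarrow> 'b::finite \<Rightarrow> real) \<Rightarrow> ('a \<Rightarrow> real) \<Rightarrow> ('b \<Rightarrow> real) \<Rightarrow> real" where
  "payoff M x y = (\<Sum>i\<in>UNIV. \<Sum>j\<in>UNIV. x i * y j * M i j)"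

definition best_reply1 :: "('a::finite \<Rightarrow> 'b::finite \<Rightarrow> real) \<Rightarrow> ('a \<Rightarrow> real) \<Rightarrow> ('b \<Rightarrow> real) \<Rightarrow> bool" where
  "best_reply1 A x y \<longleftrightarrow> mixed x \<and> (\<forall>x'. mixed x' \<longrightarrow> payoff A x' y \<le> payoff A x y)"

definition best_reply2 :: "('a::finite \<Rightarrow> 'b::finite \<Rightarrow> real) \<Rightarrow> ('b \<Rightarrow> real) \<Rightarrow> ('a \<Rightarrow> real) \<Rightarrow> bool" where
  "best_reply2 B y x \<longleftrightarrow> mixed y \<and> (\<forall>y'. mixed y' \<longrightarrow> payoff B x y' \<le> payoff B x y)"

definition nash :: "('a::finite \<Rightarrow> 'b::finite \<Rightarrow> real) \<Rightarrow> ('a \<Rightarrow> 'b \<Rightarrow> real) \<Rightarrow> ('a \<Rightarrow> real) \<Rightarrow> ('b \<Rightarrow> real) \<Rightarrow> bool" where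
  "nash A B x y \<longleftrightarrow> mixed x \<and> mixed y \<and> best_reply1 A x y \<and> best_reply2 B y x"

definition pure :: "'a \<Rightarrow> 'a \<Rightarrow> real" where
  "pure s = (\<lambda>i. if i = s then 1 else 0)"

definition strict_nash :: "('a::finite \<Rightarrow> 'b::finite \<Rightarrow> real) \<Rightarrow> ('a \<Rightarrow> 'b \<Rightarrow> real) \<Rightarrow> 'a \<Rightarrow> 'b \<Rightarrow> bool" where
  "strict_nash A B s1 s2 \<longleftrightarrow> nash A B (pure s1) (pure s2) \<and>
     (\<forall>x. best_reply1 A x (pure s2) \<longrightarrow> x = pure s1) \<and>
     (\<forall>y. best_reply2 B y (pure s1) \<longrightarrow> y = pure s2)"

end

theory Submission
  imports Defs "HOL-Analysis.Analysis"
begin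

lemma payoff_row: "payoff M x y = (\<Sum>i\<in>UNIV. x i * (\<Sum>j\<in>UNIV. y j * M i j))"
  unfolding payoff_def by (simp add: sum_distrib_left mult_ac)

lemma payoff_T: "payoff M x y = payoff (\<lambda>j i. M i j) y x"
  unfolding payoff_def by (subst sum.swap) (simp add: mult_ac)

lemma br2_T: "best_reply2 B y x = best_reply1 (\<lambda>j i. B i j) y x"
  unfolding best_reply1_def best_reply2_def by (simp add: payoff_T[of B])

lemma sum_pure: "(\<Sum>i\<in>UNIV. pure (s::'a::finite) i * f i) = f s"
proof -
  have "(\<Sum>i\<in>UNIV. pure s i * f i) = (\<Sum>i\<in>UNIV. if i = s then f i else 0)"
    by (rule sum.cong) (auto simp: pure_def)
  then show ?thesis using sum.delta[of UNIV s f] by simp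
qed

lemma mixed_pure: "mixed (pure s)"
  by (simp add: mixed_def pure_def)

lemma payoff_pure1: "payoff M (pure k) y = (\<Sum>j\<in>UNIV. y j * M k j)"
  by (simp add: payoff_row sum_pure)

lemma br1_iff:
  assumes "mixed x"
  shows "best_reply1 A x y \<longleftrightarrow> (\<forall>k. (\<Sum>j\<in>UNIV. y j * A k j) \<le> payoff A x y)"
proof
  assume "best_reply1 A x y"
  then show "\<forall>k. (\<Sum>j\<in>UNIV. y j * A k j) \<le> payoff A x y"
    unfolding best_reply1_def using mixed_pure payoff_pure1 by metis
next
  assume H: "\<forall>k. (\<Sum>j\<in>UNIV. y j * A k j) \<le> payoff A x y"
  have "payoff A x' y \<le> payoff A x y" if "mixed x'" for x'
  proof -
    have "payoff A x' y = (\<Sum>i\<in>UNIV. x' i * (\<Sum>j\<in>UNIV. y j * A i j))" by (rule payoff_row)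
    also have "\<dots> \<le> (\<Sum>i\<in>UNIV. x' i * payoff A x y)"
      using that H by (intro sum_mono mult_left_mono) (auto simp: mixed_def)
    also have "\<dots> = payoff A x y" using that by (simp add: mixed_def flip: sum_distrib_right)
    finally show ?thesis .
  qed
  then show "best_reply1 A x y" using assms by (simp add: best_reply1_def)
qed

lemma br1_supp:
  assumes br: "best_reply1 A x y" and xk: "x k > 0"
  shows "(\<Sum>j\<in>UNIV. y j * A i j) \<le> (\<Sum>j\<in>UNIV. y j * A k j)"
proof -
  have mx: "mixed x" using br by (simp add: best_reply1_def)
  define a where "a i = (\<Sum>j\<in>UNIV. y j * A i j)" for i
  define v where "v = payoff A x y"
  have av: "\<And>i. a i \<le> v" using br1_iff[OF mx] br unfolding a_def v_def by blast
  have vs: "v = (\<Sum>i\<in>UNIV. x i * a i)" unfolding v_def a_def by (rule payoff_row)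
  show ?thesis
  proof (rule ccontr)
    assume "\<not> ?thesis"
    then have "a k < v" using av[of i] unfolding a_def by linarith
    then have "(\<Sum>i\<in>UNIV. x i * a i) < (\<Sum>i\<in>UNIV. x i * v)"
      using mx av xk by (intro sum_strict_mono_ex1) (auto simp: mixed_def intro: mult_left_mono intro!: exI[of _ k])
    also have "\<dots> = v" using mx by (simp add: mixed_def flip: sum_distrib_right)
    finally show False using vs by simp
  qed
qed


definition gain :: "('a::finite \<Rightarrow> 'b::finite \<Rightarrow> real) \<Rightarrow> ('a \<Rightarrow> real) \<Rightarrow> ('b \<Rightarrow> real) \<Rightarrow> 'a \<Rightarrow> real" where
  "gain A x y i = max 0 ((\<Sum>j\<in>UNIV. y j * A i j) - payoff A x y)"

definition upd :: "('a::finite \<Rightarrow> 'b::finite \<Rightarrow> real) \<Rightarrow> ('a \<Rightarrow> real) \<Rightarrow> ('b \<Rightarrow> real) \<Rightarrow> 'a \<Rightarrow> real" where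
  "upd A x y i = (x i + gain A x y i) / (1 + sum (gain A x y) UNIV)"

lemma fix_br:
  assumes mx: "mixed x" and fx: "\<And>i. upd A x y i = x i"
  shows "best_reply1 A x y"
proof -
  define a where "a i = (\<Sum>j\<in>UNIV. y j * A i j)" for i
  define v where "v = payoff A x y"
  define g where "g = gain A x y"
  define G where "G = sum g UNIV"
  have g: "g i = max 0 (a i - v)" for i unfolding g_def gain_def a_def v_def by simp
  have gnn: "g i \<ge> 0" for i using g by simp
  have Gnn: "G \<ge> 0" unfolding G_def using gnn by (simp add: sum_nonneg)
  have xg: "x i * G = g i" for i
  proof -
    have "x i = (x i + g i) / (1 + G)" using fx[of i] unfolding upd_def g_def G_def by simp
    then have "x i * (1 + G) = x i + g i" using Gnn by (simp add: field_simps)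
    then show ?thesis by (simp add: algebra_simps)
  qed
  have vs: "v = (\<Sum>i\<in>UNIV. x i * a i)" unfolding v_def a_def by (rule payoff_row)
  have "\<exists>i. x i > 0 \<and> a i \<le> v"
  proof (rule ccontr)
    assume H: "\<not> ?thesis"
    have "\<exists>i. x i > 0"
    proof (rule ccontr)
      assume "\<not> ?thesis"
      then have "\<forall>i. x i = 0" using mx unfolding mixed_def by (meson antisym not_less)
      then show False using mx by (simp add: mixed_def)
    qed
    then obtain k where k: "x k > 0" by blast
    have "(\<Sum>i\<in>UNIV. x i * v) < (\<Sum>i\<in>UNIV. x i * a i)"
    proof (rule sum_strict_mono_ex1)
      show "\<forall>i\<in>UNIV. x i * v \<le> x i * a i"
      proof
        fix i :: 'a
        show "x i * v \<le> x i * a i"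
        proof (cases "x i > 0")
          case True then show ?thesis using H by (auto intro: mult_left_mono)
        next
          case False then have "x i = 0" using mx unfolding mixed_def by (meson antisym not_less)
          then show ?thesis by simp
        qed
      qed
      show "\<exists>i\<in>UNIV. x i * v < x i * a i" using k H by (intro bexI[of _ k]) (auto intro: mult_strict_left_mono)
    qed simp
    also have "\<dots> = v" using vs by simp
    finally show False using mx by (simp add: mixed_def flip: sum_distrib_right)
  qed
  then obtain i where i: "x i > 0" "a i \<le> v" by blast
  have "g i = 0" using g i by simp
  then have "G = 0" using xg[of i] i by simp
  then have "\<forall>k\<in>UNIV. g k = 0" unfolding G_def using gnn by (subst sum_nonneg_eq_0_iff[symmetric]) auto
  then have "\<forall>k. a k \<le> v" using g by (metis UNIV_I max.cobounded2 diff_le_0_iff_le max.absorb_iff1 max.absorb_iff2)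
  then show ?thesis using br1_iff[OF mx] unfolding a_def v_def by blast
qed


lemma upd_mixed: assumes "mixed x" shows "mixed (upd A x y)"
proof -
  define g where "g = gain A x y"
  have gnn: "g i \<ge> 0" for i unfolding g_def gain_def by simp
  have Gnn: "sum g UNIV \<ge> 0" using gnn by (simp add: sum_nonneg)
  have u: "upd A x y i = (x i + g i) / (1 + sum g UNIV)" for i unfolding upd_def g_def by simp
  have "(\<Sum>i\<in>UNIV. upd A x y i) = (\<Sum>i\<in>UNIV. x i + g i) / (1 + sum g UNIV)"
    unfolding u by (simp add: sum_divide_distrib)
  also have "\<dots> = 1" using assms Gnn by (simp add: mixed_def sum.distrib)
  finally show ?thesis using assms gnn Gnn unfolding mixed_def u by simp
qed

definition smp :: "(real^'n) set" where
  "smp = {u. (\<forall>i. 0 \<le> u$i) \<and> (\<Sum>i\<in>UNIV. u$i) = 1}"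

lemma mixed_smp: "mixed (\<lambda>i. u$i) \<longleftrightarrow> u \<in> smp"
  by (simp add: mixed_def smp_def)

lemma smp_compact: "compact (smp :: (real^'n) set)"
proof -
  have "smp \<subseteq> cbox (0::real^'n) 1"
  proof
    fix u :: "real^'n" assume u: "u \<in> smp"
    have "u$i \<le> 1" for i
    proof -
      have "u$i \<le> (\<Sum>k\<in>UNIV. u$k)" using u by (intro member_le_sum) (auto simp: smp_def)
      then show ?thesis using u by (simp add: smp_def)
    qed
    then show "u \<in> cbox 0 1" using u by (auto simp: mem_box_cart smp_def)
  qed
  then have b: "bounded (smp :: (real^'n) set)" using bounded_cbox bounded_subset by blast
  have "smp = {u::real^'n. \<forall>i. 0 \<le> u$i} \<inter> {u. (\<Sum>i\<in>UNIV. u$i) = 1}" by (auto simp: smp_def)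
  moreover have "closed {u::real^'n. (\<Sum>i\<in>UNIV. u$i) = 1}"
    by (intro closed_Collect_eq continuous_intros)
  ultimately have "closed (smp :: (real^'n) set)" using closed_positive_orthant by (metis closed_Int)
  then show ?thesis using b compact_eq_bounded_closed by blast
qed

lemma smp_convex: "convex (smp :: (real^'n) set)"
  unfolding convex_def smp_def
  by (auto simp: sum.distrib simp flip: sum_distrib_left)

lemma smp_ne: "(smp :: (real^'n) set) \<noteq> {}"
proof -
  have "(\<chi> i. 1 / real CARD('n)) \<in> (smp :: (real^'n) set)" by (simp add: smp_def)
  then show ?thesis by blast
qed

lemma nz: "1 + (\<Sum>i\<in>S. max 0 (f i::real)) \<noteq> 0"
proof -
  have "0 \<le> (\<Sum>i\<in>S. max 0 (f i::real))" by (intro sum_nonneg) simp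
  then show ?thesis by linarith
qed

lemma cont_upd:
  fixes u :: "'c::topological_space \<Rightarrow> real^'a::finite" and w :: "'c \<Rightarrow> real^'b::finite"
  assumes "continuous_on S u" "continuous_on S w"
  shows "continuous_on S (\<lambda>p. upd A (\<lambda>i. u p $ i) (\<lambda>j. w p $ j) k)"
  unfolding upd_def gain_def payoff_def
  apply (intro continuous_intros ballI assms)
  apply (rule nz)
  done

lemma nash_exists: "\<exists>x y. nash (A::'a::finite \<Rightarrow> 'b::finite \<Rightarrow> real) B x y"
proof -
  define S where "S = (smp :: (real^'a) set) \<times> (smp :: (real^'b) set)"
  define F where "F p = ((\<chi> i. upd A (\<lambda>i. fst p $ i) (\<lambda>j. snd p $ j) i),
      (\<chi> j. upd (\<lambda>j i. B i j) (\<lambda>j. snd p $ j) (\<lambda>i. fst p $ i) j))" for p :: "(real^'a) \<times> (real^'b)"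
  have "compact S" "convex S" "S \<noteq> {}" unfolding S_def
    using compact_Times[OF smp_compact smp_compact] convex_Times[OF smp_convex smp_convex]
      smp_ne[where 'n='a] smp_ne[where 'n='b] by auto
  moreover have "continuous_on S F"
    unfolding F_def
    by (intro continuous_on_Pair continuous_on_vec_lambda cont_upd continuous_on_fst continuous_on_snd continuous_on_id)
  moreover have "F \<in> S \<rightarrow> S"
  proof
    fix p assume "p \<in> S"
    then have "mixed (\<lambda>i. fst p $ i)" "mixed (\<lambda>j. snd p $ j)" unfolding S_def
      by (auto simp: mixed_smp mem_Times_iff)
    then show "F p \<in> S" unfolding S_def F_def
      using upd_mixed[of "\<lambda>i. fst p $ i" A "\<lambda>j. snd p $ j"]
        upd_mixed[of "\<lambda>j. snd p $ j" "\<lambda>j i. B i j" "\<lambda>i. fst p $ i"]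
      by (auto simp: mixed_smp[symmetric] mem_Times_iff)
  qed
  ultimately obtain p where p: "p \<in> S" "F p = p" using brouwer by blast
  define x where "x = (\<lambda>i. fst p $ i)"
  define y where "y = (\<lambda>j. snd p $ j)"
  have mx: "mixed x" and my: "mixed y" using p(1) unfolding S_def x_def y_def
    by (auto simp: mixed_smp mem_Times_iff)
  have "fst (F p) = fst p" "snd (F p) = snd p" using p(2) by auto
  then have f1: "upd A x y i = x i" and f2: "upd (\<lambda>j i. B i j) y x j = y j" for i j
    unfolding F_def x_def y_def by (auto simp: vec_eq_iff)
  have "best_reply1 A x y" using fix_br[OF mx] f1 by blast
  moreover have "best_reply2 B y x" using fix_br[OF my, of "\<lambda>j i. B i j" x] f2 by (simp add: br2_T)
  ultimately show ?thesis using mx my unfolding nash_def by blast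
qed


lemma br1_T: "best_reply1 A x y = best_reply2 (\<lambda>j i. A i j) x y"
  unfolding best_reply1_def best_reply2_def by (simp add: payoff_T[of A])

lemma nash_T: "nash A B x y = nash (\<lambda>j i. B i j) (\<lambda>j i. A i j) y x"
  unfolding nash_def br1_T[of A x y] br2_T[of B y x] by auto

lemma payoff_pp: "payoff M (pure a) (pure b) = M a b"
  by (simp add: payoff_pure1 sum_pure mult.commute)

lemma rowe: "mixed y \<Longrightarrow> (\<Sum>j\<in>UNIV. y j * (A i j + e * c)) = (\<Sum>j\<in>UNIV. y j * A i j) + (e * c::real)"
  by (simp add: mixed_def distrib_left sum.distrib flip: sum_distrib_right)

lemma key:
  fixes A :: "'a::finite \<Rightarrow> 'b::finite \<Rightarrow> real" and B :: "'a \<Rightarrow> 'b \<Rightarrow> real"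
  assumes N: "nash A B (pure s1) (pure s2)"
    and U: "\<forall>x y. nash A B x y \<longrightarrow> x = pure s1 \<and> y = pure s2"
    and t: "t \<noteq> s1" "A t s2 = A s1 s2"
  shows False
proof -
  define c where "c i = (if i = t then 1 else (0::real))" for i
  define Ae where "Ae e = (\<lambda>i j. A i j + e * c i)" for e
  define e where "e n = 1 / real (Suc n)" for n
  have "\<forall>n. \<exists>p. nash (Ae (e n)) B (fst p) (snd p)"
  proof
    fix n
    obtain x y where "nash (Ae (e n)) B x y" using nash_exists by blast
    then show "\<exists>p. nash (Ae (e n)) B (fst p) (snd p)" by (intro exI[of _ "(x, y)"]) simp
  qed
  from choice[OF this] obtain P where P: "\<forall>n. nash (Ae (e n)) B (fst (P n)) (snd (P n))" by blast
  define X where "X n = fst (P n)" for n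
  define Y where "Y n = snd (P n)" for n
  have XY: "nash (Ae (e n)) B (X n) (Y n)" for n using P unfolding X_def Y_def by blast
  have mX: "mixed (X n)" and mY: "mixed (Y n)" for n using XY[of n] by (auto simp: nash_def)
  define z where "z n = ((\<chi> i. X n i), (\<chi> j. Y n j))" for n
  have zK: "z n \<in> (smp :: (real^'a) set) \<times> (smp :: (real^'b) set)" for n
    using mX[of n] mY[of n] by (simp add: z_def mixed_smp[symmetric])
  have "seq_compact ((smp :: (real^'a) set) \<times> (smp :: (real^'b) set))"
    by (intro compact_imp_seq_compact compact_Times smp_compact)
  then have "\<exists>l\<in>(smp :: (real^'a) set) \<times> (smp :: (real^'b) set). \<exists>r. strict_mono r \<and> (z \<circ> r) \<longlonglongrightarrow> l"
    using zK unfolding seq_compact_def by blast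
  then obtain l r where l: "l \<in> (smp :: (real^'a) set) \<times> (smp :: (real^'b) set)"
      and r: "strict_mono r" and lim: "(z \<circ> r) \<longlonglongrightarrow> l"
    by blast
  define x where "x i = fst l $ i" for i
  define y where "y j = snd l $ j" for j
  have limX: "(\<lambda>n. X (r n) i) \<longlonglongrightarrow> x i" for i
  proof -
    have "(\<lambda>n. fst ((z \<circ> r) n) $ i) \<longlonglongrightarrow> fst l $ i" using lim by (intro tendsto_vec_nth tendsto_fst)
    then show ?thesis by (simp add: z_def x_def)
  qed
  have limY: "(\<lambda>n. Y (r n) j) \<longlonglongrightarrow> y j" for j
  proof -
    have "(\<lambda>n. snd ((z \<circ> r) n) $ j) \<longlonglongrightarrow> snd l $ j" using lim by (intro tendsto_vec_nth tendsto_snd)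
    then show ?thesis by (simp add: z_def y_def)
  qed
  have "(\<lambda>n. 1 / real (Suc n)) \<longlonglongrightarrow> 0" using LIMSEQ_Suc[OF lim_inverse_n'] by simp
  then have "(e \<circ> r) \<longlonglongrightarrow> 0" unfolding e_def[abs_def] using r by (rule LIMSEQ_subseq_LIMSEQ)
  then have le: "(\<lambda>n. e (r n)) \<longlonglongrightarrow> 0" by (simp add: o_def)
  have mx: "mixed x" and my: "mixed y" using l unfolding x_def y_def
    by (auto simp: mixed_smp mem_Times_iff)
  have br1: "best_reply1 A x y"
    unfolding br1_iff[OF mx]
  proof
    fix k
    have H: "(\<Sum>j\<in>UNIV. Y (r n) j * Ae (e (r n)) k j) \<le> payoff (Ae (e (r n))) (X (r n)) (Y (r n))" for n
      using XY[of "r n"] br1_iff[OF mX[of "r n"]] by (auto simp: nash_def)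
    have L1: "(\<lambda>n. \<Sum>j\<in>UNIV. Y (r n) j * (A k j + e (r n) * c k)) \<longlonglongrightarrow> (\<Sum>j\<in>UNIV. y j * (A k j + 0 * c k))"
      by (intro tendsto_intros limY le)
    have L2: "(\<lambda>n. \<Sum>i\<in>UNIV. \<Sum>j\<in>UNIV. X (r n) i * Y (r n) j * (A i j + e (r n) * c i))
        \<longlonglongrightarrow> (\<Sum>i\<in>UNIV. \<Sum>j\<in>UNIV. x i * y j * (A i j + 0 * c i))"
      by (intro tendsto_intros limY limX le)
    have "(\<Sum>j\<in>UNIV. y j * (A k j + 0 * c k)) \<le> (\<Sum>i\<in>UNIV. \<Sum>j\<in>UNIV. x i * y j * (A i j + 0 * c i))"
      by (rule LIMSEQ_le[OF L1 L2]) (use H in \<open>auto simp: Ae_def payoff_def\<close>)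
    then show "(\<Sum>j\<in>UNIV. y j * A k j) \<le> payoff A x y" by (simp add: payoff_def)
  qed
  have br2: "best_reply2 B y x"
    unfolding br2_T br1_iff[OF my]
  proof
    fix k
    have H: "(\<Sum>i\<in>UNIV. X (r n) i * B i k) \<le> payoff (\<lambda>j i. B i j) (Y (r n)) (X (r n))" for n
      proof -
      have "best_reply1 (\<lambda>j i. B i j) (Y (r n)) (X (r n))" using XY[of "r n"] by (simp add: nash_def br2_T)
      then show ?thesis using br1_iff[OF mY[of "r n"], of "\<lambda>j i. B i j" "X (r n)"] by blast
    qed
    have L1: "(\<lambda>n. \<Sum>i\<in>UNIV. X (r n) i * B i k) \<longlonglongrightarrow> (\<Sum>i\<in>UNIV. x i * B i k)"
      by (intro tendsto_intros limX)
    have L2: "(\<lambda>n. \<Sum>i\<in>UNIV. \<Sum>j\<in>UNIV. Y (r n) i * X (r n) j * B j i)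
        \<longlonglongrightarrow> (\<Sum>i\<in>UNIV. \<Sum>j\<in>UNIV. y i * x j * B j i)"
      by (intro tendsto_intros limY limX)
    have "(\<Sum>i\<in>UNIV. x i * B i k) \<le> (\<Sum>i\<in>UNIV. \<Sum>j\<in>UNIV. y i * x j * B j i)"
      by (rule LIMSEQ_le[OF L1 L2]) (use H in \<open>auto simp: payoff_def\<close>)
    then show "(\<Sum>i\<in>UNIV. x i * B i k) \<le> payoff (\<lambda>j i. B i j) y x" by (simp add: payoff_def)
  qed
  have "nash A B x y" using mx my br1 br2 by (simp add: nash_def)
  then have xs: "x = pure s1" and ys: "y = pure s2" using U by auto
  have E1: "eventually (\<lambda>n. 0 < X (r n) s1) sequentially"
    using order_tendstoD(1)[OF limX[of s1]] xs by (simp add: pure_def)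
  have E2: "eventually (\<lambda>n. 0 < Y (r n) s2) sequentially"
    using order_tendstoD(1)[OF limY[of s2]] ys by (simp add: pure_def)
  have E3: "eventually (\<lambda>n. \<forall>j\<in>{j. B s1 j < B s1 s2}.
      (\<Sum>i\<in>UNIV. X (r n) i * B i j) < (\<Sum>i\<in>UNIV. X (r n) i * B i s2)) sequentially"
  proof (rule eventually_ball_finite)
    show "finite {j. B s1 j < B s1 s2}" by simp
    show "\<forall>j\<in>{j. B s1 j < B s1 s2}. eventually (\<lambda>n.
      (\<Sum>i\<in>UNIV. X (r n) i * B i j) < (\<Sum>i\<in>UNIV. X (r n) i * B i s2)) sequentially"
    proof
      fix j assume j: "j \<in> {j. B s1 j < B s1 s2}"
      have "(\<lambda>n. (\<Sum>i\<in>UNIV. X (r n) i * B i s2) - (\<Sum>i\<in>UNIV. X (r n) i * B i j))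
         \<longlonglongrightarrow> (\<Sum>i\<in>UNIV. x i * B i s2) - (\<Sum>i\<in>UNIV. x i * B i j)"
        by (intro tendsto_intros limX)
      moreover have "(\<Sum>i\<in>UNIV. x i * B i s2) - (\<Sum>i\<in>UNIV. x i * B i j) > 0"
        using j unfolding xs sum_pure by simp
      ultimately have "eventually (\<lambda>n. 0 < (\<Sum>i\<in>UNIV. X (r n) i * B i s2) - (\<Sum>i\<in>UNIV. X (r n) i * B i j)) sequentially"
        by (rule order_tendstoD(1))
      then show "eventually (\<lambda>n.
        (\<Sum>i\<in>UNIV. X (r n) i * B i j) < (\<Sum>i\<in>UNIV. X (r n) i * B i s2)) sequentially"
        by (rule eventually_mono) simp
    qed
  qed
  from eventually_conj[OF E1 eventually_conj[OF E2 E3]] obtain NN where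
    NN: "\<forall>n\<ge>NN. 0 < X (r n) s1 \<and> 0 < Y (r n) s2 \<and> (\<forall>j\<in>{j. B s1 j < B s1 s2}.
      (\<Sum>i\<in>UNIV. X (r n) i * B i j) < (\<Sum>i\<in>UNIV. X (r n) i * B i s2))"
    unfolding eventually_sequentially by blast
  define xn where "xn = X (r NN)"
  define yn where "yn = Y (r NN)"
  define \<epsilon> where "\<epsilon> = e (r NN)"
  have ep: "\<epsilon> > 0" unfolding \<epsilon>_def e_def by simp
  have xn1: "xn s1 > 0" and yn2: "yn s2 > 0"
    and E3n: "\<And>j. B s1 j < B s1 s2 \<Longrightarrow> (\<Sum>i\<in>UNIV. xn i * B i j) < (\<Sum>i\<in>UNIV. xn i * B i s2)"
    using NN unfolding xn_def yn_def by auto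
  have nn: "nash (Ae \<epsilon>) B xn yn" using XY unfolding xn_def yn_def \<epsilon>_def by simp
  have mxn: "mixed xn" and myn: "mixed yn" using nn by (auto simp: nash_def)
  have rowsE: "(\<Sum>j\<in>UNIV. yn j * Ae \<epsilon> i j) \<le> (\<Sum>j\<in>UNIV. yn j * Ae \<epsilon> s1 j)" for i
  proof -
    have "best_reply1 (Ae \<epsilon>) xn yn" using nn by (simp add: nash_def)
    then show ?thesis using br1_supp xn1 by blast
  qed
  have rows: "(\<Sum>j\<in>UNIV. yn j * A i j) + \<epsilon> * c i \<le> (\<Sum>j\<in>UNIV. yn j * A s1 j)" for i
    using rowsE[of i] t(1) unfolding Ae_def by (simp add: rowe[OF myn] c_def)
  have rowsA: "(\<Sum>j\<in>UNIV. yn j * A i j) \<le> (\<Sum>j\<in>UNIV. yn j * A s1 j)" for i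
    proof -
    have "\<epsilon> * c i \<ge> 0" using ep by (simp add: c_def)
    then show ?thesis using rows[of i] by linarith
  qed
  have brT: "best_reply1 (\<lambda>j i. B i j) yn xn" using nn by (simp add: nash_def br2_T)
  have colsup: "(\<Sum>i\<in>UNIV. xn i * B i s2) \<le> (\<Sum>i\<in>UNIV. xn i * B i j)" if "yn j > 0" for j
    using br1_supp[OF brT that, of s2] by simp
  have Bs: "B s1 j \<le> B s1 s2" for j
  proof -
    have "best_reply1 (\<lambda>j i. B i j) (pure s2) (pure s1)" using N by (simp add: nash_def br2_T)
    then have "(\<Sum>i\<in>UNIV. pure s1 i * B i j) \<le> payoff (\<lambda>j i. B i j) (pure s2) (pure s1)"
      using br1_iff[OF mixed_pure, where A="\<lambda>j i. B i j" and y="pure s1"] by blast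
    then show ?thesis by (simp add: sum_pure payoff_pp)
  qed
  have supp: "B s1 j = B s1 s2" if "yn j > 0" for j
    using colsup[OF that] E3n[of j] Bs[of j] by fastforce
  have sumB: "(\<Sum>j\<in>UNIV. yn j * B s1 j) = (\<Sum>j\<in>UNIV. yn j * B s1 s2)"
  proof (rule sum.cong)
    fix j :: 'b
    show "yn j * B s1 j = yn j * B s1 s2"
    proof (cases "yn j > 0")
      case True then show ?thesis using supp by simp
    next
      case False then have "yn j = 0" using myn unfolding mixed_def by (meson antisym not_less)
      then show ?thesis by simp
    qed
  qed simp
  have "nash A B (pure s1) yn"
    unfolding nash_def
  proof (intro conjI)
    show "mixed (pure s1)" by (rule mixed_pure)
    show "mixed yn" by (rule myn)
    show "best_reply1 A (pure s1) yn"
      unfolding br1_iff[OF mixed_pure] payoff_pure1 using rowsA by blast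
    show "best_reply2 B yn (pure s1)"
      unfolding br2_T br1_iff[OF myn]
    proof
      fix k
      have "payoff (\<lambda>j i. B i j) yn (pure s1) = (\<Sum>j\<in>UNIV. yn j * B s1 j)"
        using payoff_T[of B "pure s1" yn] by (simp add: payoff_pure1)
      also have "\<dots> = B s1 s2" using sumB myn by (simp add: mixed_def flip: sum_distrib_right)
      finally show "(\<Sum>i\<in>UNIV. pure s1 i * B i k) \<le> payoff (\<lambda>j i. B i j) yn (pure s1)"
        using Bs[of k] by (simp add: sum_pure)
    qed
  qed
  then have "yn = pure s2" using U by blast
  then have "A t s2 + \<epsilon> \<le> A s1 s2" using rows[of t] by (simp add: sum_pure c_def)
  then show False using t(2) ep by simp
qed

lemma part2:
  fixes A :: "'a::finite \<Rightarrow> 'b::finite \<Rightarrow> real" and B :: "'a \<Rightarrow> 'b \<Rightarrow> real"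
  assumes N: "nash A B (pure s1) (pure s2)"
    and U: "\<forall>x y. nash A B x y \<longrightarrow> x = pure s1 \<and> y = pure s2"
  shows "\<forall>x. best_reply1 A x (pure s2) \<longrightarrow> x = pure s1"
proof (intro allI impI)
  fix x assume bx: "best_reply1 A x (pure s2)"
  have mx: "mixed x" using bx by (simp add: best_reply1_def)
  show "x = pure s1"
  proof (rule ccontr)
    assume ne: "x \<noteq> pure s1"
    have "\<exists>t. t \<noteq> s1 \<and> x t > 0"
    proof (rule ccontr)
      assume "\<not> ?thesis"
      then have z: "\<forall>t. t \<noteq> s1 \<longrightarrow> x t = 0" using mx unfolding mixed_def by (meson antisym not_less)
      have "(\<Sum>i\<in>UNIV. x i) = (\<Sum>i\<in>UNIV. if i = s1 then x s1 else 0)"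
        by (rule sum.cong) (auto simp: z)
      then have "x s1 = 1" using mx by (simp add: mixed_def)
      then have "x = pure s1" using z by (auto simp: pure_def)
      then show False using ne by simp
    qed
    then obtain t where t: "t \<noteq> s1" "x t > 0" by blast
    have "(\<Sum>j\<in>UNIV. pure s2 j * A s1 j) \<le> (\<Sum>j\<in>UNIV. pure s2 j * A t j)"
      by (rule br1_supp[OF bx t(2)])
    then have a1: "A s1 s2 \<le> A t s2" by (simp add: sum_pure)
    have "best_reply1 A (pure s1) (pure s2)" using N by (simp add: nash_def)
    then have "(\<Sum>j\<in>UNIV. pure s2 j * A t j) \<le> payoff A (pure s1) (pure s2)"
      using br1_iff[OF mixed_pure, where A=A and y="pure s2"] by blast
    then have "A t s2 \<le> A s1 s2" by (simp add: sum_pure payoff_pp)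
    then show False using key[OF N U t(1)] a1 by simp
  qed
qed

theorem proposition1:
  fixes A :: "'a::finite \<Rightarrow> 'b::finite \<Rightarrow> real" and B :: "'a \<Rightarrow> 'b \<Rightarrow> real"
    and s1 :: 'a and s2 :: 'b
  assumes "nash A B (pure s1) (pure s2)"
    and "\<forall>x y. nash A B x y \<longrightarrow> x = pure s1 \<and> y = pure s2"
  shows "strict_nash A B s1 s2"
proof -
  have p2: "\<forall>x. best_reply1 A x (pure s2) \<longrightarrow> x = pure s1" by (rule part2[OF assms])
  have N': "nash (\<lambda>j i. B i j) (\<lambda>j i. A i j) (pure s2) (pure s1)" using nash_T[of A B "pure s1" "pure s2"] assms(1) by simp
  have U': "\<forall>y x. nash (\<lambda>j i. B i j) (\<lambda>j i. A i j) y x \<longrightarrow> y = pure s2 \<and> x = pure s1"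
  proof (intro allI impI)
    fix y x assume "nash (\<lambda>j i. B i j) (\<lambda>j i. A i j) y x"
    then have "nash A B x y" using nash_T[of A B x y] by simp
    then show "y = pure s2 \<and> x = pure s1" using assms(2) by blast
  qed
  have "\<forall>y. best_reply1 (\<lambda>j i. B i j) y (pure s1) \<longrightarrow> y = pure s2" by (rule part2[OF N' U'])
  then have p3: "\<forall>y. best_reply2 B y (pure s1) \<longrightarrow> y = pure s2" by (simp add: br2_T)
  show ?thesis unfolding strict_nash_def using assms(1) p2 p3 by blast
qed

end
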